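(* Let $n_1,n_2\in\mathbb{Z}$ and let $\overline{\nabla}_{(n_1)},\overline{\nabla}_{(n_2)}$ be the standard holomorphic structures on $\mathcal{L}_{n_1},\mathcal{L}_{n_2}$. Then the tensor product connection $$\overline{\nabla}_{(n_1)}\otimes 1+(\Phi_{(n_1)}\otimes 1)(1\otimes\overline{\nabla}_{(n_2)}):\ \mathcal{L}_{n_1}\otimes_{\mathcal{B}}\mathcal{L}_{n_2}\to\Omega^{(0,1)}(\mathbb{CP}^1_q)\otimes_{\mathcal{B}}\mathcal{L}_{n_1}\otimes_{\mathcal{B}}\mathcal{L}_{n_2}$$ coincides with the standard holomorphic structure $\overline{\nabla}_{(n_1+n_2)}$ on $\mathcal{L}_{n_1+n_2}$ when $\mathcal{L}_{n_1}\otimes_{\mathcal{B}}\mathcal{L}_{n_2}$ is identified with $\mathcal{L}_{n_1+n_2}$ via multiplication.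
   Context: Fix $0<q<1$. Let $\mathcal{A}(SU_q(2))$ be the unital complex $*$-algebra generated by $a,c$ subject to $ac=qca$, $ac^*=qc^*a$, $cc^*=c^*c$, $a^*a+c^*c=aa^*+q^2cc^*=1$. Let $U_q(su(2))$ be the Hopf algebra generated by $K,K^{-1},E,F$ with $KK^{-1}=K^{-1}K=1$, $KE=qEK$, $KF=q^{-1}FK$, $EF-FE=(K^2-K^{-2})/(q-q^{-1})$, coproduct $\Delta K=K\otimes K$, $\Delta E=E\otimes K+K^{-1}\otimes E$, $\Delta F=F\otimes K+K^{-1}\otimes F$, counit $\epsilon(K)=1$, $\epsilon(E)=\epsilon(F)=0$. It acts on $\mathcal{A}(SU_q(2))$ from the left making it a left module algebra, with $K\triangleright a=q^{-1/2}a$, $K\triangleright c=q^{-1/2}c$, $K\triangleright a^*=q^{1/2}a^*$, $K\triangleright c^*=q^{1/2}c^*$, $E\triangleright a=-qc^*$, $E\triangleright c=a^*$, $E\triangleright a^*=E\triangleright c^*=0$, $F\triangleright a=F\triangleright c=0$, $F\triangleright a^*=c$, $F\triangleright c^*=-q^{-1}a$. Put $X_-=q^{-1/2}FK$. For $n\in\mathbb{Z}$ let $\mathcal{L}_n=\{x:K\triangleright x=q^{n/2}x\}$ and $\mathcal{B}=\mathcal{A}(\mathbb{CP}^1_q):=\mathcal{L}_0$; each $\mathcal{L}_n$ is a $\mathcal{B}$-bimodule, and multiplication induces $\mathcal{B}$-bimodule isomorphisms $\mathcal{L}_n\otimes_{\mathcal{B}}\mathcal{L}_m\simeq\mathcal{L}_{n+m}$.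 Let $\Omega^1(SU_q(2))$ be the $\mathcal{A}(SU_q(2))$-bimodule which is free as a left module with basis $\omega_+,\omega_-,\omega_z$, with right multiplication determined by $\omega_\pm x=q^kx\omega_\pm$, $\omega_zx=q^{2k}x\omega_z$ for $x\in\mathcal{L}_k$. Put $\Omega^{(0,1)}(\mathbb{CP}^1_q):=\mathcal{L}_{-2}\omega_-$. For each $n$ the multiplication maps $\mu_1^{(n)}:\mathcal{L}_n\otimes_{\mathcal{B}}\Omega^{(0,1)}(\mathbb{CP}^1_q)\to\mathcal{L}_{n-2}\omega_-$ and $\mu_2^{(n)}:\Omega^{(0,1)}(\mathbb{CP}^1_q)\otimes_{\mathcal{B}}\mathcal{L}_n\to\mathcal{L}_{n-2}\omega_-$ are $\mathcal{B}$-bimodule isomorphisms; set $\Phi_{(n)}:=(\mu_2^{(n)})^{-1}\circ\mu_1^{(n)}$. The standard holomorphic structure on $\mathcal{L}_n$ is $\overline{\nabla}_{(n)}:\mathcal{L}_n\to\Omega^{(0,1)}(\mathbb{CP}^1_q)\otimes_{\mathcal{B}}\mathcal{L}_n$, $\overline{\nabla}_{(n)}(\phi)=(\mu_2^{(n)})^{-1}\big((X_-\triangleright\phi)\omega_-\big)$. *)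

theory Defs
  imports Complex_Main
begin

text \<open>The carrier is a unital ring 'a with a complex scalar multiplication smul, an
  antilinear involution star, generators a, c, and the action of the generators
  K, K^-1 (here Ki), E, F of U_q(su(2)) as operators on 'a.\<close>

definition rs :: "real \<Rightarrow> complex" where "rs r = complex_of_real r"

inductive_set suq2_gen :: "(complex \<Rightarrow> 'a::ring_1 \<Rightarrow> 'a) \<Rightarrow> ('a \<Rightarrow> 'a) \<Rightarrow> 'a \<Rightarrow> 'a \<Rightarrow> 'a set"
  for smul star a c where
  gen_one: "1 \<in> suq2_gen smul star a c"
| gen_a: "a \<in> suq2_gen smul star a c"
| gen_c: "c \<in> suq2_gen smul star a c"
| gen_as: "star a \<in> suq2_gen smul star a c"
| gen_cs: "star c \<in> suq2_gen smul star a c"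
| gen_add: "x \<in> suq2_gen smul star a c \<Longrightarrow> y \<in> suq2_gen smul star a c \<Longrightarrow> x + y \<in> suq2_gen smul star a c"
| gen_smul: "x \<in> suq2_gen smul star a c \<Longrightarrow> smul r x \<in> suq2_gen smul star a c"
| gen_mult: "x \<in> suq2_gen smul star a c \<Longrightarrow> y \<in> suq2_gen smul star a c \<Longrightarrow> x * y \<in> suq2_gen smul star a c"

definition complex_star_algebra :: "(complex \<Rightarrow> 'a::ring_1 \<Rightarrow> 'a) \<Rightarrow> ('a \<Rightarrow> 'a) \<Rightarrow> bool" where
  "complex_star_algebra smul star \<longleftrightarrow>
     (\<forall>r x y. smul r (x + y) = smul r x + smul r y) \<and>
     (\<forall>r s x. smul (r + s) x = smul r x + smul s x) \<and>
     (\<forall>r s x. smul r (smul s x) = smul (r * s) x) \<and>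
     (\<forall>x. smul 1 x = x) \<and>
     (\<forall>r x y. smul r (x * y) = smul r x * y \<and> smul r (x * y) = x * smul r y) \<and>
     (\<forall>x y. star (x + y) = star x + star y) \<and>
     (\<forall>r x. star (smul r x) = smul (cnj r) (star x)) \<and>
     (\<forall>x y. star (x * y) = star y * star x) \<and>
     (\<forall>x. star (star x) = x)"

definition suq2_algebra :: "real \<Rightarrow> (complex \<Rightarrow> 'a::ring_1 \<Rightarrow> 'a) \<Rightarrow> ('a \<Rightarrow> 'a) \<Rightarrow> 'a \<Rightarrow> 'a \<Rightarrow> bool" where
  "suq2_algebra q smul star a c \<longleftrightarrow>
     0 < q \<and> q < 1 \<and> complex_star_algebra smul star \<and>
     a * c = smul (rs q) (c * a) \<and>
     a * star c = smul (rs q) (star c * a) \<and>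
     c * star c = star c * c \<and>
     star a * a + star c * c = 1 \<and>
     a * star a + smul (rs (q^2)) (c * star c) = 1 \<and>
     suq2_gen smul star a c = UNIV"

definition lin_op :: "(complex \<Rightarrow> 'a::ring_1 \<Rightarrow> 'a) \<Rightarrow> ('a \<Rightarrow> 'a) \<Rightarrow> bool" where
  "lin_op smul T \<longleftrightarrow> (\<forall>x y. T (x + y) = T x + T y) \<and> (\<forall>r x. T (smul r x) = smul r (T x))"

definition suq2_module_algebra ::
  "real \<Rightarrow> (complex \<Rightarrow> 'a::ring_1 \<Rightarrow> 'a) \<Rightarrow> ('a \<Rightarrow> 'a) \<Rightarrow> 'a \<Rightarrow> 'a \<Rightarrow>
   ('a \<Rightarrow> 'a) \<Rightarrow> ('a \<Rightarrow> 'a) \<Rightarrow> ('a \<Rightarrow> 'a) \<Rightarrow> ('a \<Rightarrow> 'a) \<Rightarrow> bool" where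
  "suq2_module_algebra q smul star a c K Ki E F \<longleftrightarrow>
     suq2_algebra q smul star a c \<and>
     lin_op smul K \<and> lin_op smul Ki \<and> lin_op smul E \<and> lin_op smul F \<and>
     \<comment> \<open>representation of U_q(su(2))\<close>
     (\<forall>x. K (Ki x) = x \<and> Ki (K x) = x) \<and>
     (\<forall>x. K (E x) = smul (rs q) (E (K x))) \<and>
     (\<forall>x. K (F x) = smul (rs (1 / q)) (F (K x))) \<and>
     (\<forall>x. E (F x) - F (E x) = smul (1 / rs (q - 1 / q)) (K (K x) - Ki (Ki x))) \<and>
     \<comment> \<open>module algebra: compatibility with coproduct and counit\<close>
     (\<forall>x y. K (x * y) = K x * K y) \<and>
     (\<forall>x y. Ki (x * y) = Ki x * Ki y) \<and>
     (\<forall>x y. E (x * y) = E x * K y + Ki x * E y) \<and>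
     (\<forall>x y. F (x * y) = F x * K y + Ki x * F y) \<and>
     K 1 = 1 \<and> Ki 1 = 1 \<and> E 1 = 0 \<and> F 1 = 0 \<and>
     \<comment> \<open>action on generators\<close>
     K a = smul (rs (q powr (-1/2))) a \<and> K c = smul (rs (q powr (-1/2))) c \<and>
     K (star a) = smul (rs (q powr (1/2))) (star a) \<and> K (star c) = smul (rs (q powr (1/2))) (star c) \<and>
     E a = - smul (rs q) (star c) \<and> E c = star a \<and> E (star a) = 0 \<and> E (star c) = 0 \<and>
     F a = 0 \<and> F c = 0 \<and> F (star a) = c \<and> F (star c) = - smul (rs (1 / q)) a"

text \<open>Line bundles L_n = {x. K x = q^(n/2) x}; B = L_0.\<close>
definition Lsp :: "real \<Rightarrow> (complex \<Rightarrow> 'a::ring_1 \<Rightarrow> 'a) \<Rightarrow> ('a \<Rightarrow> 'a) \<Rightarrow> int \<Rightarrow> 'a set" where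
  "Lsp q smul K n = {x. K x = smul (rs (q powr (real_of_int n / 2))) x}"

definition Xminus :: "real \<Rightarrow> (complex \<Rightarrow> 'a::ring_1 \<Rightarrow> 'a) \<Rightarrow> ('a \<Rightarrow> 'a) \<Rightarrow> ('a \<Rightarrow> 'a) \<Rightarrow> 'a \<Rightarrow> 'a" where
  "Xminus q smul K F x = smul (rs (q powr (-1/2))) (F (K x))"

text \<open>Omega^1(SU_q(2)): free left module with basis omega_+, omega_-, omega_z; an element
  is its triple of coefficients (alpha, beta, gamma) = alpha omega_+ + beta omega_- + gamma omega_z.\<close>
type_synonym 'a omega1 = "'a \<times> 'a \<times> 'a"

definition om_add :: "'a::ring_1 omega1 \<Rightarrow> 'a omega1 \<Rightarrow> 'a omega1" where
  "om_add u v = (fst u + fst v, fst (snd u) + fst (snd v), snd (snd u) + snd (snd v))"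

definition omega_minus :: "'a::ring_1 \<Rightarrow> 'a omega1" where
  "omega_minus x = (0, x, 0)"

definition om_lmult :: "'a::ring_1 \<Rightarrow> 'a omega1 \<Rightarrow> 'a omega1" where
  "om_lmult x u = (x * fst u, x * fst (snd u), x * snd (snd u))"

text \<open>right multiplication omega * x for homogeneous x \<in> L_k:
  omega_pm x = q^k x omega_pm, omega_z x = q^(2k) x omega_z.\<close>
definition om_rmult_hom :: "real \<Rightarrow> (complex \<Rightarrow> 'a::ring_1 \<Rightarrow> 'a) \<Rightarrow> ('a \<Rightarrow> 'a) \<Rightarrow> 'a omega1 \<Rightarrow> 'a \<Rightarrow> 'a omega1" where
  "om_rmult_hom q smul K u x =
     (let k = (SOME k. x \<in> Lsp q smul K k) in
       (fst u * smul (rs (q powr real_of_int k)) x,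
        fst (snd u) * smul (rs (q powr real_of_int k)) x,
        snd (snd u) * smul (rs (q powr (2 * real_of_int k))) x))"

text \<open>The standard holomorphic structure, composed with mu_2^(n):
  mu_2^(n) (nablabar_(n) phi) = (X_- phi) omega_-.\<close>
definition nablabar_img :: "real \<Rightarrow> (complex \<Rightarrow> 'a::ring_1 \<Rightarrow> 'a) \<Rightarrow> ('a \<Rightarrow> 'a) \<Rightarrow> ('a \<Rightarrow> 'a) \<Rightarrow> 'a \<Rightarrow> 'a omega1" where
  "nablabar_img q smul K F phi = omega_minus (Xminus q smul K F phi)"

end

theory Submission
  imports Defs
begin

theorem proposition3p8:
  fixes q :: real and smul :: "complex \<Rightarrow> 'a::ring_1 \<Rightarrow> 'a"
    and star K Ki E F :: "'a \<Rightarrow> 'a" and a c :: 'a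
    and n1 n2 :: int and phi1 phi2 :: 'a
  assumes "suq2_module_algebra q smul star a c K Ki E F"
    and "phi1 \<in> Lsp q smul K n1" and "phi2 \<in> Lsp q smul K n2"
  shows "phi1 * phi2 \<in> Lsp q smul K (n1 + n2) \<and>
         om_add (om_rmult_hom q smul K (nablabar_img q smul K F phi1) phi2)
                (om_lmult phi1 (nablabar_img q smul K F phi2))
         = nablabar_img q smul K F (phi1 * phi2)"
proof -
  note M = assms(1)[unfolded suq2_module_algebra_def suq2_algebra_def complex_star_algebra_def lin_op_def]
  have q00: "0 < q" using M by (elim conjE) assumption
  have q01: "q < 1" using M by (elim conjE) assumption
  note q0 = q00 q01
  have sadd[rule_format]: "\<forall>r x y. smul r (x + y) = smul r x + smul r y" using M by (elim conjE) assumption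
  have smm[rule_format]: "\<forall>r s x. smul r (smul s x) = smul (r * s) x" using M by (elim conjE) assumption
  have s1[rule_format]: "\<forall>x. smul 1 x = x" using M by (elim conjE) assumption
  have smlr: "\<forall>r x y. smul r (x * y) = smul r x * y \<and> smul r (x * y) = x * smul r y" using M by (elim conjE) assumption
  have sml: "\<And>r x y. smul r (x * y) = smul r x * y" using smlr by blast
  have smr: "\<And>r x y. smul r (x * y) = x * smul r y" using smlr by blast
  have Kmul[rule_format]: "\<forall>x y. K (x * y) = K x * K y" using M by (elim conjE) assumption
  have Fmul[rule_format]: "\<forall>x y. F (x * y) = F x * K y + Ki x * F y" using M by (elim conjE) assumption
  have Klin: "\<forall>r x. K (smul r x) = smul r (K x)" using M by (elim conjE) assumption
  have KiK0: "\<forall>x. K (Ki x) = x \<and> Ki (K x) = x" using M by (elim conjE) assumption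
  have KiK: "\<And>x. Ki (K x) = x" using KiK0 by blast
  have sadd2: "\<forall>r s x. smul (r + s) x = smul r x + smul s x" using M by (elim conjE) assumption
  have s0: "\<And>r. smul r 0 = 0"
    using sadd[of _ 0 0] by simp
  define al where "al = rs (q powr (real_of_int n1 / 2))"
  define be where "be = rs (q powr (real_of_int n2 / 2))"
  have K1: "K phi1 = smul al phi1" using assms(2) by (simp add: Lsp_def al_def)
  have K2: "K phi2 = smul be phi2" using assms(3) by (simp add: Lsp_def be_def)
  have ab: "al * be = rs (q powr (real_of_int (n1 + n2) / 2))"
    using q0 by (simp add: al_def be_def rs_def powr_add[symmetric] of_real_mult[symmetric] add_divide_distrib)
  have bb: "be * be = rs (q powr real_of_int n2)"
    using q0 by (simp add: be_def rs_def powr_add[symmetric] of_real_mult[symmetric])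
  have mem: "phi1 * phi2 \<in> Lsp q smul K (n1 + n2)"
  proof -
    have "K (phi1 * phi2) = smul al phi1 * smul be phi2" by (simp only: Kmul K1 K2)
    also have "\<dots> = smul be (smul al (phi1 * phi2))" by (simp only: sml[symmetric] smr[symmetric])
    also have "\<dots> = smul (rs (q powr (real_of_int (n1 + n2) / 2))) (phi1 * phi2)" by (simp only: smm mult.commute[of be al] ab)
    finally show ?thesis by (simp only: Lsp_def mem_Collect_eq)
  qed
  define k where "k = (SOME k. phi2 \<in> Lsp q smul K k)"
  have key: "X * smul (rs (q powr real_of_int k)) phi2 = X * smul (rs (q powr real_of_int n2)) phi2" for X
  proof (cases "phi2 = 0")
    case True then show ?thesis by (simp add: s0)
  next
    case False
    have "phi2 \<in> Lsp q smul K k" unfolding k_def by (rule someI, rule assms(3))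
    then have "smul (rs (q powr (real_of_int k / 2))) phi2 = smul be phi2"
      using K2 by (simp add: Lsp_def)
    have "rs (q powr (real_of_int k / 2)) = be"
    proof (rule ccontr)
      assume ne: "rs (q powr (real_of_int k / 2)) \<noteq> be"
      define d where "d = rs (q powr (real_of_int k / 2)) - be"
      have dne: "d \<noteq> 0" using ne by (simp add: d_def)
      have "smul (rs (q powr (real_of_int k / 2))) phi2 = smul (d + be) phi2" by (simp add: d_def)
      also have "\<dots> = smul d phi2 + smul be phi2" using sadd2 by blast
      finally have "smul d phi2 = 0"
        using \<open>smul (rs (q powr (real_of_int k / 2))) phi2 = smul be phi2\<close> by simp
      then have "smul (1/d) (smul d phi2) = 0" by (simp add: s0)
      then have "phi2 = 0" using dne by (simp add: smm s1)
      then show False using False by simp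
    qed
    then have "q powr (real_of_int k / 2) = q powr (real_of_int n2 / 2)"
      by (simp add: be_def rs_def)
    then have "real_of_int k / 2 = real_of_int n2 / 2" using q0 by (simp add: powr_inj)
    then have "k = n2" by simp
    then show ?thesis by simp
  qed
  define s where "s = rs (q powr (-1/2))"
  have X: "\<And>x. Xminus q smul K F x = smul s (F (K x))" by (simp add: Xminus_def s_def)
  have "Xminus q smul K F (phi1 * phi2)
        = Xminus q smul K F phi1 * smul (rs (q powr real_of_int n2)) phi2 + phi1 * Xminus q smul K F phi2"
  proof -
    have "Xminus q smul K F (phi1 * phi2) = smul s (F (K phi1 * K phi2))" by (simp add: X Kmul)
    also have "\<dots> = smul s (F (K phi1) * K (K phi2) + Ki (K phi1) * F (K phi2))" by (simp only: Fmul)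
    also have "\<dots> = smul s (F (K phi1)) * K (K phi2) + phi1 * smul s (F (K phi2))"
      by (simp only: sadd KiK sml[of s "F (K phi1)" "K (K phi2)"] smr[of s phi1 "F (K phi2)"])
    also have "K (K phi2) = smul (rs (q powr real_of_int n2)) phi2"
      using Klin by (simp add: K2 smm bb)
    finally show ?thesis by (simp only: X)
  qed
  then show ?thesis using mem key
    by (simp add: om_add_def om_rmult_hom_def nablabar_img_def omega_minus_def om_lmult_def Let_def k_def)
qed

end
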